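(* Let $f$ be a multiplicative function with (i) $|f(p)|\le C_0$ for all primes $p$; (ii) $\sum_{n\le X}|f(n)|\le C_1X$ for $X\ge1$; (iii) $\sum_{n\le X}|f(n)|^2\le C_1X(\log X)^A$ for $X\ge2$, and let $g:\mathbb{N}\to\mathbb{R}$ be any function. Let $N\ge2$ be an integer and $2\le s\le N$ a parameter. For integers $0\le i\le\log_2N$ put $$J_i=\min\left(i+1,\ \lfloor\log_2N\rfloor-i+1,\ \left\lfloor\tfrac12\log_2(64N/s)\right\rfloor\right),$$ and define the rectangles (in the $(p,n)$-plane) $$\mathcal R_i=(0,2^i]\times\left(\frac N{2^{i+1}},\frac N{2^i}\right],\qquad 0\le i\le\log_2N,$$ $$\mathcal R_{i,j,k}=\left(\frac{2^{i+j}}k,\frac{2^{i+j+1}}{2k-1}\right]\times\left(\frac{(k-1)N}{2^{i+j}},\frac{(2k-1)N}{2^{i+j+1}}\right],$$ for $0\le i\le\log_2N$, $1\le j\le J_i$, $2^{j-1}\le k\le2^j$. Then each $\mathcal R_{i,j,k}$ is of the form $(P,P']\times(N_1,N_1']$ with $$P'-P\ge\tfrac14,\qquad N_1'-N_1\ge\tfrac14,\qquad (P'-P)(N_1'-N_1)\gg s.$$ Moreover, let $\mathcal E$ be the set of pairs $(p,n)$, $p$ prime, $n$ a positive integer, with $pn\le N$, which lie in none of the rectangles $\mathcal R_i$, $\mathcal R_{i,j,k}$. Then for every fixed $\epsilon>0$, $$\sum_{(p,n)\in\mathcal E}f(p)(\log p)f(n)e(g(pn))\ll(\log N)^{\epsilon}\left(N+(Ns)^{1/2}\log(2N/s)\log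 s\right),$$ with implied constant depending only on $\epsilon,A,C_0,C_1$.
   Context: $e(x)=\exp(2\pi ix)$; $\log_2$ is the base-2 logarithm. *)

theory Defs
  imports Complex_Main "HOL-Computational_Algebra.Primes"
begin

definition e :: "real \<Rightarrow> complex" where
  "e x = exp (2 * complex_of_real pi * \<i> * complex_of_real x)"

definition multiplicative :: "(nat \<Rightarrow> complex) \<Rightarrow> bool" where
  "multiplicative f \<longleftrightarrow> f 1 = 1 \<and> (\<forall>m n. coprime m n \<longrightarrow> f (m * n) = f m * f n)"

definition Jidx :: "nat \<Rightarrow> real \<Rightarrow> nat \<Rightarrow> int" where
  "Jidx N s i = min (int i + 1)
      (min (\<lfloor>log 2 (real N)\<rfloor> - int i + 1) \<lfloor>log 2 (64 * real N / s) / 2\<rfloor>)"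

definition Rect_i :: "nat \<Rightarrow> nat \<Rightarrow> (real \<times> real) set" where
  "Rect_i N i = {0<..(2::real)^i} \<times> {real N / 2^(i+1) <.. real N / 2^i}"

definition Rect_ijk :: "nat \<Rightarrow> nat \<Rightarrow> nat \<Rightarrow> nat \<Rightarrow> (real \<times> real) set" where
  "Rect_ijk N i j k =
     {(2::real)^(i+j) / real k <.. 2^(i+j+1) / (2 * real k - 1)} \<times>
     {(real k - 1) * real N / 2^(i+j) <.. (2 * real k - 1) * real N / 2^(i+j+1)}"

definition valid_ijk :: "nat \<Rightarrow> real \<Rightarrow> nat \<Rightarrow> nat \<Rightarrow> nat \<Rightarrow> bool" where
  "valid_ijk N s i j k \<longleftrightarrow> real i \<le> log 2 (real N) \<and> 1 \<le> j \<and> int j \<le> Jidx N s i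
      \<and> 2^(j-1) \<le> k \<and> k \<le> 2^j"

definition exc_set :: "nat \<Rightarrow> real \<Rightarrow> (nat \<times> nat) set" where
  "exc_set N s = {(p, n). prime p \<and> 1 \<le> n \<and> p * n \<le> N
      \<and> (\<forall>i. real i \<le> log 2 (real N) \<longrightarrow> (real p, real n) \<notin> Rect_i N i)
      \<and> (\<forall>i j k. valid_ijk N s i j k \<longrightarrow> (real p, real n) \<notin> Rect_ijk N i j k)}"

end

theory Submission
  imports Defs "HOL-Library.Discrete_Functions"
begin


lemma pow_div_fact_le_exp:
  fixes x :: real assumes "x \<ge> 0" shows "x^n / fact n \<le> exp x"
proof -
  have s: "summable (\<lambda>k. x^k /\<^sub>R fact k)" using exp_converges sums_summable by blast
  have "sum (\<lambda>k. x^k /\<^sub>R fact k) {n} \<le> suminf (\<lambda>k. x^k /\<^sub>R fact k)"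
    by (rule sum_le_suminf[OF s]) (use assms in auto)
  then show ?thesis using sums_unique[OF exp_converges[of x]] by (simp add: divide_inverse mult.commute)
qed

lemma prod_primes_dvd_binom:
  fixes m y :: nat assumes "y \<le> m"
  shows "(\<Prod>p\<in>{p. prime p \<and> m < p \<and> p \<le> m+y}. p) dvd ((m+y) choose y)"
proof -
  define S where "S = {p. prime p \<and> m < p \<and> p \<le> m+y}"
  have fin: "finite S" unfolding S_def by (rule finite_subset[of _ "{..m+y}"]) auto
  have each: "p dvd ((m+y) choose y)" if "p \<in> S" for p
  proof -
    have pr: "prime p" and mp: "m < p" and pl: "p \<le> m+y" using that by (auto simp: S_def)
    have eq: "fact y * fact m * ((m+y) choose y) = (fact (m+y) :: nat)"
      using binomial_fact_lemma[of y "m+y"] by simp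
    have "p dvd fact (m+y)" using prime_dvd_fact_iff[OF pr] pl by simp
    hence "p dvd fact y * fact m * ((m+y) choose y)" using eq by simp
    moreover have "\<not> p dvd fact y" using prime_dvd_fact_iff[OF pr] mp assms by simp
    moreover have "\<not> p dvd fact m" using prime_dvd_fact_iff[OF pr] mp by simp
    ultimately show ?thesis using pr by (simp add: prime_dvd_mult_iff)
  qed
  have "\<forall>p\<in>S. p dvd ((m+y) choose y) \<Longrightarrow> S \<subseteq> {p. prime p} \<Longrightarrow> (\<Prod>p\<in>S. p) dvd ((m+y) choose y)"
    using fin
  proof (induction S rule: finite_induct)
    case empty then show ?case by simp
  next
    case (insert q F)
    have "coprime q (\<Prod>p\<in>F. p)"
    proof (rule prime_imp_coprime)
      show "prime q" using insert by auto
      show "\<not> q dvd (\<Prod>p\<in>F. p)"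
      proof
        assume "q dvd (\<Prod>p\<in>F. p)"
        then obtain r where "r \<in> F" "q dvd r" using insert prime_dvd_prod_iff[of F q "\<lambda>p. p"] by auto
        hence "q = r" using insert by (auto simp: primes_dvd_imp_eq)
        thus False using insert \<open>r\<in>F\<close> by auto
      qed
    qed
    then show ?case using insert by (simp add: divides_mult)
  qed
  then show ?thesis using each by (auto simp: S_def)
qed

lemma prime_interval_bound:
  fixes m y :: nat assumes "y \<le> m" "1 \<le> y"
  shows "(\<Sum>p\<in>{p. prime p \<and> m < p \<and> p \<le> m+y}. ln (real p)) \<le> y * (1 + ln ((m+y)/y))"
proof -
  define S where "S = {p. prime p \<and> m < p \<and> p \<le> m+y}"
  have fin: "finite S" unfolding S_def by (rule finite_subset[of _ "{..m+y}"]) auto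
  have pos: "\<forall>p\<in>S. p > 0" by (auto simp: S_def prime_gt_0_nat)
  have "(\<Sum>p\<in>S. ln (real p)) = ln (\<Prod>p\<in>S. real p)"
    using pos fin by (subst ln_prod) auto
  also have "\<dots> \<le> ln (real ((m+y) choose y))"
  proof -
    have d: "(\<Prod>p\<in>S. p) dvd ((m+y) choose y)" using prod_primes_dvd_binom[OF assms(1)] by (simp add: S_def)
    have "(m+y) choose y > 0" by simp
    hence "(\<Prod>p\<in>S. p) \<le> (m+y) choose y" using d dvd_imp_le by blast
    hence "real (\<Prod>p\<in>S. p) \<le> real ((m+y) choose y)" by (simp only: of_nat_le_iff)
    hence "(\<Prod>p\<in>S. real p) \<le> real ((m+y) choose y)" by simp
    moreover have "(\<Prod>p\<in>S. real p) > 0" using pos by (simp add: prod_pos)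
    ultimately show ?thesis by simp
  qed
  also have "\<dots> \<le> ln (real (m+y)^y / fact y)"
  proof -
    have "((m+y) choose y) * fact y \<le> (m+y)^y" by (rule binomial_fact_pow)
    hence "real (((m+y) choose y) * fact y) \<le> real ((m+y)^y)" by (simp only: of_nat_le_iff)
    hence "real ((m+y) choose y) * fact y \<le> real (m+y)^y" by simp
    hence "real ((m+y) choose y) \<le> real (m+y)^y / fact y" by (simp add: field_simps)
    moreover have "real ((m+y) choose y) > 0" by simp
    ultimately show ?thesis using assms by (subst ln_le_cancel_iff) auto
  qed
  also have "\<dots> = y * ln (real (m+y)) - ln (fact y)" using assms by (simp add: ln_div ln_realpow del: of_nat_add)
  also have "\<dots> \<le> y * ln (real (m+y)) - (y * ln (real y) - y)"
  proof -
    have "real y ^ y / fact y \<le> exp (real y)" by (rule pow_div_fact_le_exp) simp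
    hence "ln (real y ^ y / fact y) \<le> ln (exp (real y))" using assms by (subst ln_le_cancel_iff) auto
    hence "ln (real y ^ y / fact y) \<le> real y" by simp
    moreover have "ln (real y ^ y / fact y) = y * ln (real y) - ln (fact y)" using assms by (simp add: ln_div ln_realpow)
    ultimately have "y * ln (real y) - ln (fact y) \<le> y" by simp
    thus ?thesis by simp
  qed
  also have "\<dots> = y * (1 + ln ((m+y)/y))" using assms by (simp add: ln_div algebra_simps del: of_nat_add)
  finally show ?thesis by (simp add: S_def)
qed

lemma mono_ylog:
  fixes y1 y2 B :: real assumes "0 < y1" "y1 \<le> y2" "y2 \<le> B"
  shows "y1 * (1 + ln (B/y1)) \<le> y2 * (1 + ln (B/y2))"
proof -
  have "ln (y2/y1) \<le> y2/y1 - 1" using assms by (intro ln_le_minus_one) auto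
  hence a: "y1 * ln (y2/y1) \<le> y2 - y1" using assms by (simp add: field_simps)
  have b: "ln (B/y2) \<ge> 0" using assms by simp
  have "ln (B/y1) = ln (B/y2) + ln (y2/y1)" using assms by (simp add: ln_div)
  hence "y1 * (1 + ln (B/y1)) = y1 + y1 * ln (B/y2) + y1 * ln (y2/y1)" by (simp add: algebra_simps)
  also have "\<dots> \<le> y1 + y2 * ln (B/y2) + (y2 - y1)" using a b assms by (intro add_mono mult_right_mono) auto
  finally show ?thesis by (simp add: algebra_simps)
qed


lemma geo:
  fixes N n p i J :: nat
  assumes n1: "1 \<le> n" and lo: "n * 2^i \<le> N" and hi: "N < n * 2^(i+1)"
    and p: "real p > 2^i"
    and nr: "\<And>j k. 1 \<le> j \<Longrightarrow> j \<le> J \<Longrightarrow> 2^(j-1) \<le> k \<Longrightarrow> k \<le> 2^j \<Longrightarrow> (real p, real n) \<notin> Rect_ijk N i j k"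
  shows "j \<le> J \<Longrightarrow> real p * of_int \<lceil>real n * 2^(i+j) / real N\<rceil> > 2^(i+j)"
proof (induction j)
  define t where "t = (\<lambda>j::nat. real n * 2^(i+j) / real N)"
  have Npos: "real N > 0" using lo n1 by (metis le_trans nat_mult_1 mult_le_mono one_le_numeral one_le_power of_nat_0_less_iff less_le_trans zero_less_one)
  have nr1: "real n * 2^i \<le> real N" using lo by (metis of_nat_le_iff of_nat_mult of_nat_numeral of_nat_power)
  have hr1: "real N < real n * 2^(i+1)" using hi by (metis of_nat_less_iff of_nat_mult of_nat_numeral of_nat_power)
  have t0: "t 0 > 1/2" "t 0 \<le> 1" using nr1 hr1 Npos by (auto simp: t_def field_simps)
  {
    case 0
    have "\<lceil>t 0\<rceil> = 1" using t0 by (intro ceiling_unique) auto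
    thus ?case using p by (simp add: t_def)
  next
    case (Suc j)
    have tj: "t j = 2^j * t 0" by (simp add: t_def power_add field_simps)
    have tS: "t (Suc j) = 2 * t j" by (simp add: t_def field_simps)
    define c where "c = \<lceil>t j\<rceil>"
    have IH: "real p * of_int c > 2^(i+j)" using Suc by (simp add: c_def t_def)
    have c1: "of_int c - 1 < t j" "t j \<le> of_int c" unfolding c_def by (linarith, linarith)
    show ?case
    proof (cases "2 * t j > 2 * of_int c - 1")
      case True
      have "\<lceil>t (Suc j)\<rceil> = 2 * c" using True c1 tS by (intro ceiling_unique) auto
      hence "of_int \<lceil>t (Suc j)\<rceil> = 2 * (of_int c :: real)" by simp
      moreover have "real p * (2 * of_int c) > 2^(i + Suc j)" using IH by simp
      ultimately show ?thesis by (simp add: t_def)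
    next
      case False
      have ceq: "\<lceil>t (Suc j)\<rceil> = 2 * c - 1" using False c1 tS by (intro ceiling_unique) auto
      have j1: "1 \<le> j"
      proof (rule ccontr)
        assume "\<not> 1 \<le> j"
        hence "j = 0" by simp
        hence "c = 1" using t0 unfolding c_def by (simp, intro ceiling_unique, auto)
        thus False using False t0 \<open>j = 0\<close> by simp
      qed
      have tpos: "t j > 2^(j-1)"
      proof -
        have "(2::real)^j = 2 * 2^(j-1)" using j1 by (metis power_Suc Suc_diff_1 less_le_trans zero_less_one)
        thus ?thesis using tj t0 by (simp add: field_simps)
      qed
      have tle: "t j \<le> 2^j" using tj t0 by (simp add: mult_left_le)
      have "(0::real) < 2^(j-1)" by simp
      hence "(of_int c::real) > 0" using tpos c1 by linarith
      hence cpos: "c \<ge> 1" by simp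
      define k where "k = nat c"
      have kc: "real k = of_int c" using cpos by (simp add: k_def)
      have kl: "2^(j-1) \<le> k"
      proof -
        have "(2::real)^(j-1) < real k" using tpos c1 kc by linarith
        hence "real (2^(j-1)) < real k" by simp
        thus ?thesis by linarith
      qed
      have ku: "k \<le> 2^j"
      proof -
        have "c \<le> 2^j" unfolding c_def using tle by (simp add: ceiling_le_iff)
        thus ?thesis by (simp add: k_def nat_le_iff)
      qed
      have notin: "(real p, real n) \<notin> Rect_ijk N i j k" using nr[OF j1 _ kl ku] Suc.prems by simp
      have T: "(2::real)^(i+j) > 0" by simp
      have nin1: "(real k - 1) * real N / 2^(i+j) < real n" using c1 kc Npos T by (simp add: t_def field_simps)
      have nin2: "real n \<le> (2 * real k - 1) * real N / 2^(i+j+1)" using False kc Npos T by (simp add: t_def field_simps)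
      have kpos: "real k > 0" using kc cpos by simp
      have pin1: "2^(i+j) / real k < real p" using IH kc kpos by (simp add: field_simps)
      have "\<not> real p \<le> 2^(i+j+1) / (2 * real k - 1)"
        using notin nin1 nin2 pin1 by (simp add: Rect_ijk_def)
      hence "real p * (2 * real k - 1) > 2^(i+j+1)" using kpos c1 cpos kc by (simp add: field_simps split: if_splits)
      thus ?thesis using ceq kc by (simp add: t_def)
    qed
  }
qed


lemma fiber_bound:
  fixes N n i J :: nat
  assumes n1: "1 \<le> n" and nN: "n \<le> N" and iB: "i = floor_log (N div n)"
    and J1: "1 \<le> J" and Ji: "J \<le> i + 1"
  shows "(\<Sum>p\<in>{p. prime p \<and> p * n \<le> N \<and> (real p, real n) \<notin> Rect_i N i \<and>
            (\<forall>j k. 1 \<le> j \<longrightarrow> j \<le> J \<longrightarrow> 2^(j-1) \<le> k \<longrightarrow> k \<le> 2^j \<longrightarrow> (real p, real n) \<notin> Rect_ijk N i j k)}.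
           ln (real p)) \<le> 4 * 2^i * real J / 2^J"
proof -
  define S where "S = {p. prime p \<and> p * n \<le> N \<and> (real p, real n) \<notin> Rect_i N i \<and>
            (\<forall>j k. 1 \<le> j \<longrightarrow> j \<le> J \<longrightarrow> 2^(j-1) \<le> k \<longrightarrow> k \<le> 2^j \<longrightarrow> (real p, real n) \<notin> Rect_ijk N i j k)}"
  define B where "B = N div n"
  have B1: "B \<ge> 1" using div_le_mono[OF nN, of n] n1 by (simp add: B_def)
  have Bl: "2^i \<le> B" using floor_log_exp2_le[of B] B1 iB by (simp add: B_def)
  have Bh: "B < 2^(i+1)" using floor_log_exp2_gt[of B] iB by (simp add: B_def)
  have lo: "n * 2^i \<le> N"
  proof -
    have "n * 2^i \<le> n * B" using Bl by simp
    also have "\<dots> \<le> N" by (simp add: B_def)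
    finally show ?thesis .
  qed
  have hi: "N < n * 2^(i+1)"
  proof -
    have e1: "N = n * B + N mod n" by (simp add: B_def)
    have e2: "N mod n < n" using n1 by simp
    have "N < n * (B + 1)" using e1 e2 by (simp add: algebra_simps)
    also have "\<dots> \<le> n * 2^(i+1)" using Bh by (intro mult_left_mono) auto
    finally show ?thesis .
  qed
  define D where "D = (2::nat)^(i+2-J)"
  have DJ: "real D * 2^J = 4 * 2^i"
  proof -
    have "D * 2^J = 2^(i+2)" unfolding D_def using Ji by (simp flip: power_add)
    hence "real (D * 2^J) = real (2^(i+2))" by simp
    thus ?thesis by simp
  qed
  define m where "m = max (2^i) (B - D)"
  define y where "y = B - m"
  have mB: "m \<le> B" using Bl by (simp add: m_def)
  have my: "m + y = B" using mB by (simp add: y_def)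
  have ym: "y \<le> m" using Bh Bl by (simp add: y_def m_def)
  have yD: "y \<le> D" by (simp add: y_def m_def)
  have Npos: "real N > 0" using n1 nN by simp
  have npos: "real n > 0" using n1 by simp
  have sub: "S \<subseteq> {p. prime p \<and> m < p \<and> p \<le> m + y}"
  proof
    fix p assume "p \<in> S"
    hence pr: "prime p" and pn: "p * n \<le> N" and nR: "(real p, real n) \<notin> Rect_i N i"
      and nr: "\<And>j k. 1 \<le> j \<Longrightarrow> j \<le> J \<Longrightarrow> 2^(j-1) \<le> k \<Longrightarrow> k \<le> 2^j \<Longrightarrow> (real p, real n) \<notin> Rect_ijk N i j k"
      by (auto simp: S_def)
    have pB: "p \<le> B" using pn n1 by (simp add: B_def less_eq_div_iff_mult_less_eq)
    have "real (n * 2^i) \<le> real N" using lo by (simp only: of_nat_le_iff)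
    hence nr1: "real n * 2^i \<le> real N" by simp
    have "real N < real (n * 2^(i+1))" using hi by (simp only: of_nat_less_iff)
    hence hr1: "real N < real n * 2^(i+1)" by simp
    have "real n \<in> {real N / 2^(i+1) <.. real N / 2^i}" using nr1 hr1 by (simp add: field_simps)
    moreover have "real p > 0" using pr prime_gt_0_nat by simp
    ultimately have p2: "real p > 2^i" using nR by (auto simp: Rect_i_def)
    have g: "real p * of_int \<lceil>real n * 2^(i+J) / real N\<rceil> > 2^(i+J)"
      by (rule geo[OF n1 lo hi p2 nr]) auto
    define T where "T = (2::real)^(i+J)"
    define t where "t = real n * T / real N"
    have Tpos: "T > 0" by (simp add: T_def)
    have c: "of_int \<lceil>t\<rceil> < t + 1" by linarith
    have tpos: "t > 0" using Tpos npos Npos by (simp add: t_def)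
    have "real p * (t + 1) > T"
    proof -
      have "real p * of_int \<lceil>t\<rceil> > T" using g by (simp add: t_def T_def)
      moreover have "real p * of_int \<lceil>t\<rceil> \<le> real p * (t + 1)" using c by (intro mult_left_mono) auto
      ultimately show ?thesis by linarith
    qed
    hence "real p * (real n * T + real N) > T * real N"
      using tpos npos Npos Tpos by (simp add: t_def field_simps)
    moreover have den: "real n * T + real N > 0" using npos Npos Tpos by (simp add: add_pos_pos)
    ultimately have p1: "real p > T * real N / (real n * T + real N)"
      by (simp add: pos_divide_less_eq)
    have den2: "real N + T * real n \<noteq> 0" "real n * T + real N \<noteq> 0" using den by (auto simp: algebra_simps)
    have "real N / real n - T * real N / (real n * T + real N) = real N * real N / (real n * (real n * T + real N))"
      using npos Npos Tpos den2 by (simp add: field_simps)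
    also have "\<dots> < real N * real N / (real n * (real n * T))"
      using npos Npos Tpos den by (intro divide_strict_left_mono mult_strict_left_mono) (auto intro!: mult_pos_pos)
    also have "\<dots> \<le> (real n * 2^(i+1)) * (real n * 2^(i+1)) / (real n * (real n * T))"
      using hr1 Npos npos Tpos by (intro divide_right_mono mult_mono) auto
    also have "\<dots> = 4 * 2^i * 2^i / T" using npos Tpos by (simp add: field_simps)
    also have "\<dots> = real D"
    proof -
      have "T = 2^i * 2^J" by (simp add: T_def power_add)
      thus ?thesis using DJ by (simp add: field_simps)
    qed
    finally have "real N / real n - real D < real p" using p1 by linarith
    moreover have "real B \<le> real N / real n"
      unfolding B_def by (rule of_nat_div_le_of_nat)
    ultimately have "real B < real p + real D" by linarith
    hence "B < p + D" by linarith
    hence "B - D < p" using prime_gt_0_nat[OF pr] by arith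
    moreover have "2^i < p" using p2 by (metis of_nat_less_iff of_nat_numeral of_nat_power)
    ultimately have "m < p" by (simp add: m_def)
    thus "p \<in> {p. prime p \<and> m < p \<and> p \<le> m + y}" using pr pB my by simp
  qed
  have finS: "finite {p. prime p \<and> m < p \<and> p \<le> m + y}" by (rule finite_subset[of _ "{..m+y}"]) auto
  have "(\<Sum>p\<in>S. ln (real p)) \<le> (\<Sum>p\<in>{p. prime p \<and> m < p \<and> p \<le> m + y}. ln (real p))"
    using sub finS by (intro sum_mono2) auto
  also have "\<dots> \<le> 4 * 2^i * real J / 2^J"
  proof (cases "y = 0")
    case True
    hence e: "{p. prime p \<and> m < p \<and> p \<le> m + y} = {}" by auto
    have "(\<Sum>p\<in>{p. prime p \<and> m < p \<and> p \<le> m + y}. ln (real p)) = 0" by (subst e) simp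
    moreover have "0 \<le> 4 * 2^i * real J / (2::real)^J" by simp
    ultimately show ?thesis by linarith
  next
    case False
    hence y1: "1 \<le> y" by simp
    have "(\<Sum>p\<in>{p. prime p \<and> m < p \<and> p \<le> m + y}. ln (real p)) \<le> y * (1 + ln ((m+y)/y))"
      by (rule prime_interval_bound[OF ym y1])
    also have "\<dots> \<le> y * (1 + ln (2^(i+1)/y))"
    proof -
      have "real (m+y) \<le> 2^(i+1)" using my Bh by (metis less_imp_le of_nat_le_iff of_nat_numeral of_nat_power)
      hence "ln ((m+y)/y) \<le> ln (2^(i+1)/y)" using y1 my B1 by (intro ln_mono divide_right_mono) auto
      thus ?thesis using y1 by (intro mult_left_mono) auto
    qed
    also have "\<dots> \<le> D * (1 + ln (2^(i+1)/D))"
    proof (rule mono_ylog)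
      show "0 < real y" using y1 by simp
      show "real y \<le> real D" using yD by simp
      have "D \<le> 2^(i+1)" unfolding D_def using J1 by (intro power_increasing) auto
      thus "real D \<le> 2^(i+1)" by (metis of_nat_le_iff of_nat_numeral of_nat_power)
    qed
    also have "\<dots> = D * (1 + (real J - 1) * ln 2)"
    proof -
      have "(2::real)^(i+1) / D = 2^(J-1)"
      proof -
        have ex: "i+2-J + (J-1) = i+1" using J1 Ji by arith
        have "D * 2^(J-1) = (2::nat)^(i+2-J + (J-1))" by (simp add: D_def power_add)
        hence "D * 2^(J-1) = (2::nat)^(i+1)" using ex by simp
        hence "real (D * 2^(J-1)) = real ((2::nat)^(i+1))" by (rule arg_cong)
        hence "real D * 2^(J-1) = 2^(i+1)" by simp
        moreover have "real D > 0" by (simp add: D_def)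
        ultimately show ?thesis by (simp add: field_simps)
      qed
      thus ?thesis using J1 by (simp add: ln_realpow of_nat_diff)
    qed
    also have "\<dots> \<le> D * real J"
    proof -
      have "ln (2::real) \<le> 1" using ln_2_less_1 by simp
      hence "(real J - 1) * ln 2 \<le> real J - 1" using J1 by (intro mult_left_le) auto
      thus ?thesis by (intro mult_left_mono) auto
    qed
    also have "\<dots> = 4 * 2^i * real J / 2^J" using DJ by (simp add: field_simps)
    finally show ?thesis .
  qed
  finally show ?thesis by (simp add: S_def)
qed


lemma ln2_ge_half: "ln (2::real) \<ge> 1/2"
proof -
  have "ln (1/2::real) \<le> 1/2 - 1" by (rule ln_le_minus_one) simp
  thus ?thesis by (simp add: ln_div)
qed

lemma psi_sum_eq: "(\<Sum>t<n. real t / 2^t) = 2 - 2 * (real n + 1) / 2^n"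
proof (induction n)
  case 0 show ?case by simp
next
  case (Suc n)
  have "(\<Sum>t<Suc n. real t / 2^t) = 2 - 2 * (real n + 1) / 2^n + real n / 2^n" using Suc.IH by simp
  also have "\<dots> = 2 - 2 * (real (Suc n) + 1) / 2^(Suc n)" by (simp add: field_simps)
  finally show ?case .
qed

lemma psi_sum_le: "(\<Sum>t<n. real t / 2^t) \<le> 2"
  by (simp add: psi_sum_eq)

lemma psi_shift_le: "(\<Sum>t<n. real (t+1) / 2^(t+1)) \<le> 2"
proof -
  have "(\<Sum>t<Suc n. real t / 2^t) = (\<Sum>t<n. real (Suc t) / 2^(Suc t))"
    by (subst sum.lessThan_Suc_shift) simp
  thus ?thesis using psi_sum_le[of "Suc n"] by simp
qed

lemma sum3_le1: "0 \<le> (z::real) \<Longrightarrow> 0 \<le> y \<Longrightarrow> a = x \<Longrightarrow> a \<le> x + y + z" by simp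
lemma sum3_le2: "0 \<le> (z::real) \<Longrightarrow> 0 \<le> x \<Longrightarrow> a = y \<Longrightarrow> a \<le> x + y + z" by simp
lemma sum3_le3: "0 \<le> (x::real) \<Longrightarrow> 0 \<le> y \<Longrightarrow> a = z \<Longrightarrow> a \<le> x + y + z" by simp

lemma floor_log2_eq: "N \<ge> 1 \<Longrightarrow> \<lfloor>log 2 (real N)\<rfloor> = int (floor_log N)"
  by (simp add: floor_log_altdef)

lemma main_sum:
  fixes N :: nat and s :: real
  assumes N2: "2 \<le> N" and s2: "2 \<le> s" and sN: "s \<le> real N"
  shows "(\<Sum>i\<le>floor_log N. real (nat (Jidx N s i)) / 2^(nat (Jidx N s i)))
           \<le> 4 + 3 * sqrt (s / real N) * ln (2 * real N / s) * ln s"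
proof -
  define L where "L = floor_log N"
  define lg where "lg = log 2 (64 * real N / s)"
  define M where "M = \<lfloor>lg / 2\<rfloor>"
  define M' where "M' = nat M"
  define \<psi> where "\<psi> = (\<lambda>t::nat. real t / 2^t)"
  have Npos: "real N > 0" using N2 by simp
  have spos: "s > 0" using s2 by simp
  have FL: "\<lfloor>log 2 (real N)\<rfloor> = int L" using N2 by (simp add: floor_log2_eq L_def)
  have LlogN: "real L \<le> log 2 (real N)" using FL by linarith
  have lgeq: "lg = 6 + log 2 (real N) - log 2 s"
  proof -
    have "lg = log 2 64 + log 2 (real N) - log 2 s" using Npos spos
      by (simp add: lg_def log_divide log_mult)
    moreover have "log 2 (64::real) = 6"
    proof -
      have "log 2 (64::real) = log 2 (2 powr 6)" by simp
      also have "\<dots> = 6" by (rule log_powr_cancel) auto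
      finally show ?thesis .
    qed
    ultimately show ?thesis by simp
  qed
  have lg6: "lg \<ge> 6"
  proof -
    have "log 2 s \<le> log 2 (real N)" using sN spos by simp
    thus ?thesis using lgeq by simp
  qed
  have M3: "M \<ge> 3" unfolding M_def using lg6 by linarith
  have M'M: "int M' = M" using M3 by (simp add: M'_def)
  have Jeq: "Jidx N s i = min (int i + 1) (min (int L - int i + 1) M)" for i
    by (simp add: Jidx_def FL M_def lg_def)
  have dec: "\<psi> (nat (Jidx N s i)) \<le> \<psi> (i+1) + \<psi> (L - i + 1) + (if M' \<le> i+1 \<and> M' \<le> L - i + 1 then \<psi> M' else 0)"
    if iL: "i \<le> L" for i
  proof -
    have nn: "\<psi> t \<ge> 0" for t by (simp add: \<psi>_def)
    have LL: "int L - int i + 1 = int (L - i + 1)" using iL by simp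
    have ifnn: "0 \<le> (if M' \<le> i+1 \<and> M' \<le> L - i + 1 then \<psi> M' else 0)" using nn[of M'] by simp
    have n1: "0 \<le> \<psi> (i+1)" "0 \<le> \<psi> (L-i+1)" by (rule nn)+
    consider (a) "Jidx N s i = int i + 1" | (b) "Jidx N s i = int L - int i + 1" | (c) "Jidx N s i = M"
      "M \<le> int i + 1" "M \<le> int L - int i + 1"
      unfolding Jeq by linarith
    then show ?thesis
    proof cases
      case a
      hence "nat (Jidx N s i) = i + 1" by simp
      hence "\<psi> (nat (Jidx N s i)) = \<psi> (i+1)" by (rule arg_cong)
      thus ?thesis by (rule sum3_le1[OF ifnn n1(2)])
    next
      case b
      hence "Jidx N s i = int (L - i + 1)" using LL by linarith
      hence "nat (Jidx N s i) = L - i + 1" by (simp only: nat_int)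
      hence "\<psi> (nat (Jidx N s i)) = \<psi> (L - i + 1)" by (rule arg_cong)
      thus ?thesis by (rule sum3_le2[OF ifnn n1(1)])
    next
      case c
      have e: "nat (Jidx N s i) = M'" using c(1) by (simp add: M'_def)
      have c2: "M' \<le> i+1" "M' \<le> L - i + 1" using c(2,3) M'M iL by linarith+
      have z: "(if M' \<le> i+1 \<and> M' \<le> L - i + 1 then \<psi> M' else 0) = \<psi> M'" using c2 by simp
      have a: "\<psi> (nat (Jidx N s i)) = \<psi> M'" using e by (rule arg_cong)
      show ?thesis by (rule sum3_le3[OF n1 trans[OF a z[symmetric]]])
    qed
  qed
  have s1: "(\<Sum>i\<le>L. \<psi> (i+1)) \<le> 2"
    using psi_shift_le[of "Suc L"] by (simp add: \<psi>_def lessThan_Suc_atMost)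
  have s2': "(\<Sum>i\<le>L. \<psi> (L - i + 1)) \<le> 2"
  proof -
    have "(\<Sum>i\<le>L. \<psi> (L - i + 1)) = (\<Sum>i<Suc L. (\<lambda>t. \<psi> (t+1)) (Suc L - Suc i))"
      by (simp add: lessThan_Suc_atMost)
    also have "\<dots> = (\<Sum>t<Suc L. \<psi> (t+1))" by (rule sum.nat_diff_reindex)
    also have "\<dots> \<le> 2" using psi_shift_le[of "Suc L"] by (simp add: \<psi>_def)
    finally show ?thesis .
  qed
  define Sset where "Sset = {i\<in>{..L}. M' \<le> i+1 \<and> M' \<le> L - i + 1}"
  have s3: "(\<Sum>i\<le>L. (if M' \<le> i+1 \<and> M' \<le> L - i + 1 then \<psi> M' else 0)) = real (card Sset) * \<psi> M'"
    by (simp add: sum.inter_filter[symmetric] Sset_def)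
  have card_le: "real (card Sset) \<le> log 2 s"
  proof (cases "Sset = {}")
    case True
    have "log 2 s \<ge> 0" using s2 by simp
    thus ?thesis using True by simp
  next
    case False
    then obtain i0 where i0: "i0 \<in> Sset" by blast
    have sub: "Sset \<subseteq> {M' - 1 .. L + 1 - M'}" unfolding Sset_def by auto
    have "card Sset \<le> card {M' - 1 .. L + 1 - M'}" by (rule card_mono[OF _ sub]) simp
    also have "\<dots> = Suc (L + 1 - M') - (M' - 1)" by simp
    finally have c1: "card Sset \<le> Suc (L + 1 - M') - (M' - 1)" .
    have i0b: "M' \<le> i0 + 1" "M' \<le> L - i0 + 1" "i0 \<le> L" using i0 by (auto simp: Sset_def)
    have "real (card Sset) \<le> real L + 3 - 2 * real M'" using c1 i0b M3 M'M by linarith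
    also have "\<dots> < log 2 s - 1"
    proof -
      have "real M' > lg / 2 - 1" using M'M unfolding M_def by linarith
      thus ?thesis using LlogN lgeq by linarith
    qed
    finally show ?thesis by linarith
  qed
  have psiM: "\<psi> M' \<le> lg * sqrt (s / real N) / 8"
  proof -
    have Mle: "real M' \<le> lg / 2" using M'M unfolding M_def by linarith
    have Mge: "real M' \<ge> lg / 2 - 1" using M'M unfolding M_def by linarith
    have "2 powr (lg / 2 - 1) \<le> 2 powr real M'" using Mge by (intro powr_mono) auto
    hence pw: "2 powr (lg / 2 - 1) \<le> 2 ^ M'" by (simp add: powr_realpow)
    have "2 powr (lg / 2 - 1) = sqrt (64 * real N / s) / 2"
    proof -
      have "2 powr (lg / 2) = sqrt (2 powr lg)" by (simp add: powr_half_sqrt[symmetric] powr_powr)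
      also have "2 powr lg = 64 * real N / s" using Npos spos by (simp add: lg_def)
      finally show ?thesis by (simp add: powr_diff)
    qed
    also have "\<dots> = 4 * sqrt (real N / s)"
    proof -
      have "sqrt (64 * real N / s) = sqrt (64 * (real N / s))" by simp
      also have "\<dots> = sqrt 64 * sqrt (real N / s)" by (rule real_sqrt_mult)
      also have "sqrt (64::real) = 8" by (rule real_sqrt_unique) auto
      finally show ?thesis by simp
    qed
    finally have pw2: "4 * sqrt (real N / s) \<le> 2 ^ M'" using pw by simp
    have sq: "sqrt (real N / s) > 0" using Npos spos by simp
    have "\<psi> M' = real M' / 2^M'" by (simp add: \<psi>_def)
    also have "\<dots> \<le> (lg / 2) / (4 * sqrt (real N / s))"
      using Mle pw2 sq by (intro frac_le) auto
    also have "\<dots> = lg * sqrt (s / real N) / 8"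
    proof -
      have "sqrt (s / real N) * sqrt (real N / s) = 1" using Npos spos by (simp add: real_sqrt_mult[symmetric])
      hence inv: "sqrt (s / real N) = 1 / sqrt (real N / s)" using sq by (simp add: eq_divide_eq)
      show ?thesis unfolding inv by simp
    qed
    finally show ?thesis .
  qed
  define u where "u = ln (2 * real N / s)"
  have u: "u \<ge> ln 2" using sN spos by (simp add: u_def field_simps)
  have l2: "ln (2::real) \<ge> 1/2" by (rule ln2_ge_half)
  have lgu: "lg \<le> 12 * u"
  proof -
    have "lg = log 2 (32 * (2 * real N / s))" by (simp add: lg_def)
    also have "\<dots> = log 2 32 + log 2 (2 * real N / s)" using Npos spos by (simp only: log_mult) simp
    finally have "lg = log 2 32 + log 2 (2 * real N / s)" .
    moreover have "log 2 (32::real) = 5"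
    proof -
      have "log 2 (32::real) = log 2 (2 powr 5)" by simp
      also have "\<dots> = 5" by (rule log_powr_cancel) auto
      finally show ?thesis .
    qed
    moreover have "log 2 (2 * real N / s) = u / ln 2" by (simp add: u_def log_def)
    ultimately have "lg = 5 + u / ln 2" by simp
    moreover have "5 \<le> 5 * (u / ln 2)" using u l2 by (simp add: field_simps)
    moreover have "u / ln 2 \<le> 2 * u" using u l2 by (simp add: field_simps)
    ultimately show ?thesis by linarith
  qed
  have ls: "log 2 s \<le> 2 * ln s"
  proof -
    have "ln s \<ge> 0" using s2 by simp
    hence "ln s * 1 \<le> ln s * (2 * ln 2)" using l2 by (intro mult_left_mono) auto
    hence "ln s / ln 2 \<le> 2 * ln s" using l2 by (simp add: field_simps)
    thus ?thesis by (simp add: log_def)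
  qed
  have mid: "real (card Sset) * \<psi> M' \<le> 3 * sqrt (s / real N) * u * ln s"
  proof -
    have pn: "\<psi> M' \<ge> 0" by (simp add: \<psi>_def)
    have "real (card Sset) * \<psi> M' \<le> (2 * ln s) * (lg * sqrt (s / real N) / 8)"
      using card_le ls psiM pn by (intro mult_mono) auto
    also have "\<dots> \<le> (2 * ln s) * (12 * u * sqrt (s / real N) / 8)"
      using lgu s2 by (intro mult_left_mono divide_right_mono mult_right_mono) auto
    also have "\<dots> = 3 * sqrt (s / real N) * u * ln s" by simp
    finally show ?thesis .
  qed
  have "(\<Sum>i\<le>L. \<psi> (nat (Jidx N s i))) \<le> (\<Sum>i\<le>L. \<psi> (i+1) + \<psi> (L - i + 1) + (if M' \<le> i+1 \<and> M' \<le> L - i + 1 then \<psi> M' else 0))"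
    using dec by (intro sum_mono) auto
  also have "\<dots> = (\<Sum>i\<le>L. \<psi> (i+1)) + (\<Sum>i\<le>L. \<psi> (L - i + 1)) + real (card Sset) * \<psi> M'"
    by (simp only: sum.distrib s3)
  also have "\<dots> \<le> 4 + 3 * sqrt (s / real N) * u * ln s" using s1 s2' mid by linarith
  finally show ?thesis by (simp add: \<psi>_def L_def u_def)
qed


lemma part1:
  assumes N2: "2 \<le> N" and s2: "2 \<le> s" and sN: "s \<le> real N" and v: "valid_ijk N s i j k"
  shows "\<exists>P P' N1 N1'. Rect_ijk N i j k = {P<..P'} \<times> {N1<..N1'}
               \<and> P' - P \<ge> 1/4 \<and> N1' - N1 \<ge> 1/4 \<and> (P' - P) * (N1' - N1) \<ge> (1/256) * s"
proof -
  from v have j1: "1 \<le> j" and kl: "2^(j-1) \<le> k" and ku: "k \<le> 2^j"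
    and J: "int j \<le> Jidx N s i" by (auto simp: valid_ijk_def)
  from J have ji: "j \<le> i + 1" by (simp add: Jidx_def)
  from J have "int j \<le> \<lfloor>log 2 (real N)\<rfloor> - int i + 1" by (simp add: Jidx_def)
  hence "real j \<le> log 2 (real N) - real i + 1" by linarith
  hence "real (i+j) \<le> log 2 (real N) + 1" by simp
  hence "2 powr real (i+j) \<le> 2 powr (log 2 (real N) + 1)" by (intro powr_mono) auto
  also have "\<dots> = 2 * real N" using N2 by (simp add: powr_add)
  finally have T: "(2::real)^(i+j) \<le> 2 * real N" by (metis powr_realpow zero_less_numeral)
  from J have "int j \<le> \<lfloor>log 2 (64 * real N / s) / 2\<rfloor>" by (simp add: Jidx_def)
  hence "real (2*j) \<le> log 2 (64 * real N / s)" by linarith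
  hence "2 powr real (2*j) \<le> 2 powr (log 2 (64 * real N / s))" by (intro powr_mono) auto
  also have "\<dots> = 64 * real N / s" using N2 s2 by simp
  finally have F: "(2::real)^(2*j) \<le> 64 * real N / s" by (metis powr_realpow zero_less_numeral)
  have k1: "1 \<le> k" using kl by (metis le_trans one_le_power one_le_numeral)
  have kr: "(1::real) \<le> real k" using k1 by simp
  have kur: "real k \<le> 2^j" using ku by (metis of_nat_le_iff of_nat_numeral of_nat_power)
  define T where "T = (2::real)^(i+j)"
  have Tpos: "T > 0" by (simp add: T_def)
  have Tsuc: "(2::real)^(i+j+1) = 2 * T" by (simp add: T_def)
  have kk: "real k * (2 * real k - 1) \<le> 2^(2*j+1)"
  proof -
    have "real k * (2 * real k - 1) \<le> 2^j * (2 * 2^j)" using kr kur by (intro mult_mono) (linarith | simp)+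
    also have "\<dots> = 2^(2*j+1)" by (metis mult.left_commute power_Suc power_add mult_2 Suc_eq_plus1)
    finally show ?thesis .
  qed
  have pw: "(2::real)^(2*j+1) \<le> 4 * T"
  proof -
    have "(2::real)^(2*j+1) \<le> 2^(i+j+2)" using ji by (intro power_increasing) auto
    thus ?thesis by (simp add: T_def power_add)
  qed
  define P where "P = T / real k"
  define P' where "P' = 2 * T / (2 * real k - 1)"
  define N1 where "N1 = (real k - 1) * real N / T"
  define N1' where "N1' = (2 * real k - 1) * real N / (2 * T)"
  have R: "Rect_ijk N i j k = {P<..P'} \<times> {N1<..N1'}"
    by (simp add: Rect_ijk_def P_def P'_def N1_def N1'_def T_def)
  have dP: "P' - P = T / (real k * (2 * real k - 1))"
    using kr by (simp add: P_def P'_def field_simps)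
  have dN: "N1' - N1 = real N / (2 * T)"
    using Tpos by (simp add: N1_def N1'_def field_simps)
  have den: "real k * (2 * real k - 1) > 0" using kr by simp
  have a: "P' - P \<ge> 1/4" unfolding dP using den kk pw by (simp add: field_simps)
  have b: "N1' - N1 \<ge> 1/4" unfolding dN using Tpos T by (simp add: field_simps T_def)
  have "(P' - P) * (N1' - N1) = real N / (2 * (real k * (2 * real k - 1)))"
    unfolding dP dN using Tpos den by (simp add: field_simps)
  also have "\<dots> \<ge> real N / (4 * 2^(2*j))"
  proof -
    have "2 * (real k * (2 * real k - 1)) \<le> 4 * 2^(2*j)" using kk by simp
    thus ?thesis using den N2 by (intro divide_left_mono) auto
  qed
  finally have c0: "(P' - P) * (N1' - N1) \<ge> real N / (4 * 2^(2*j))" .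
  have "real N / (4 * 2^(2*j)) \<ge> (1/256) * s"
  proof -
    have "4 * (2::real)^(2*j) * s \<le> 4 * (64 * real N / s) * s" using F s2 by (intro mult_right_mono) auto
    also have "\<dots> = 256 * real N" using s2 by simp
    finally show ?thesis by (simp add: field_simps)
  qed
  with c0 have c: "(P' - P) * (N1' - N1) \<ge> (1/256) * s" by linarith
  show ?thesis using R a b c by blast
qed


lemma norm_e: "norm (e x) = 1"
  by (simp add: e_def)

lemma Jidx_bounds:
  assumes N2: "2 \<le> N" and s2: "2 \<le> s" and sN: "s \<le> real N" and iL: "i \<le> floor_log N"
  shows "1 \<le> Jidx N s i" "Jidx N s i \<le> int i + 1"
proof -
  have FL: "\<lfloor>log 2 (real N)\<rfloor> = int (floor_log N)" using N2 by (simp add: floor_log2_eq)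
  have "64 * real N / s \<ge> 64" using sN s2 by (simp add: field_simps)
  hence "log 2 (64 * real N / s) \<ge> log 2 64" by simp
  moreover have "log 2 (64::real) = 6"
  proof -
    have "log 2 (64::real) = log 2 (2 powr 6)" by simp
    also have "\<dots> = 6" by (rule log_powr_cancel) auto
    finally show ?thesis .
  qed
  ultimately have "\<lfloor>log 2 (64 * real N / s) / 2\<rfloor> \<ge> 3" by linarith
  thus "1 \<le> Jidx N s i" using iL FL by (simp add: Jidx_def)
  show "Jidx N s i \<le> int i + 1" by (simp add: Jidx_def)
qed

lemma part2:
  fixes f :: "nat \<Rightarrow> complex" and g :: "nat \<Rightarrow> real" and N :: nat and s C0 C1 :: real
  assumes mf: "multiplicative f"
    and hC0: "\<forall>p. prime p \<longrightarrow> norm (f p) \<le> C0"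
    and hC1: "\<forall>X::real. X \<ge> 1 \<longrightarrow> (\<Sum>n\<in>{1..nat \<lfloor>X\<rfloor>}. norm (f n)) \<le> C1 * X"
    and N2: "2 \<le> N" and s2: "2 \<le> s" and sN: "s \<le> real N"
  shows "norm (\<Sum>(p, n)\<in>exc_set N s. f p * complex_of_real (ln (real p)) * f n * e (g (p * n)))
          \<le> 16 * C0 * C1 * (real N + sqrt (real N * s) * ln (2 * real N / s) * ln s)"
proof -
  define E where "E = exc_set N s"
  define L where "L = floor_log N"
  define \<iota> where "\<iota> = (\<lambda>n. floor_log (N div n))"
  define Jn where "Jn = (\<lambda>i. nat (Jidx N s i))"
  define w where "w = (\<lambda>i. 4 * 2^i * real (Jn i) / 2^(Jn i))"
  have C0: "C0 \<ge> 0" using hC0 two_is_prime_nat by (meson norm_ge_zero order_trans)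
  have f1: "f 1 = 1" using mf by (simp add: multiplicative_def)
  have C1: "C1 \<ge> 1" using hC1[rule_format, of 1] f1 by simp
  have FL: "\<lfloor>log 2 (real N)\<rfloor> = int L" using N2 by (simp add: floor_log2_eq L_def)
  have LlogN: "real L \<le> log 2 (real N)" using FL by linarith
  have Esub: "E \<subseteq> {..N} \<times> {..N}"
  proof
    fix x assume "x \<in> E"
    then obtain p n where x: "x = (p,n)" "prime p" "1 \<le> n" "p * n \<le> N" by (auto simp: E_def exc_set_def)
    have "p * 1 \<le> p * n" using x(3) by (rule mult_le_mono2)
    moreover have "1 * n \<le> p * n" using prime_gt_0_nat[OF x(2)] by (intro mult_le_mono1) simp
    ultimately have "p \<le> p * n" "n \<le> p * n" by simp_all
    hence "p \<le> N" "n \<le> N" using x(4) by linarith+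
    thus "x \<in> {..N} \<times> {..N}" using x(1) by simp
  qed
  have finE: "finite E" by (rule finite_subset[OF Esub]) auto
  define h where "h = (\<lambda>(p::nat, n::nat). C0 * ln (real p) * norm (f n))"
  have "norm (\<Sum>(p, n)\<in>E. f p * complex_of_real (ln (real p)) * f n * e (g (p * n)))
        \<le> (\<Sum>x\<in>E. norm ((\<lambda>(p,n). f p * complex_of_real (ln (real p)) * f n * e (g (p * n))) x))"
    by (rule norm_sum)
  also have "\<dots> \<le> (\<Sum>x\<in>E. h x)"
  proof (rule sum_mono)
    fix x assume "x \<in> E"
    then obtain p n where x: "x = (p,n)" "prime p" by (auto simp: E_def exc_set_def)
    have lp: "ln (real p) \<ge> 0" using x prime_gt_0_nat[of p] by simp
    have "norm (f p * complex_of_real (ln (real p)) * f n * e (g (p * n))) = norm (f p) * ln (real p) * norm (f n)"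
      using lp by (simp add: norm_mult norm_e)
    also have "\<dots> \<le> C0 * ln (real p) * norm (f n)"
      using hC0 x lp by (intro mult_right_mono) auto
    finally show "norm ((\<lambda>(p,n). f p * complex_of_real (ln (real p)) * f n * e (g (p * n))) x) \<le> h x"
      using x by (simp add: h_def)
  qed
  also have "(\<Sum>x\<in>E. h x) = (\<Sum>p\<in>{..N}. \<Sum>n\<in>{n. n \<in> {..N} \<and> (p,n) \<in> E}. h (p,n))"
  proof -
    have "E = Sigma {..N} (\<lambda>p. {n. n \<in> {..N} \<and> (p,n) \<in> E})" using Esub by auto
    hence "(\<Sum>x\<in>E. h x) = (\<Sum>x\<in>Sigma {..N} (\<lambda>p. {n. n \<in> {..N} \<and> (p,n) \<in> E}). h x)" by simp
    also have "\<dots> = (\<Sum>p\<in>{..N}. \<Sum>n\<in>{n. n \<in> {..N} \<and> (p,n) \<in> E}. h (p,n))"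
      by (subst sum.Sigma) auto
    finally show ?thesis .
  qed
  also have "\<dots> = (\<Sum>n\<in>{..N}. \<Sum>p\<in>{p. p \<in> {..N} \<and> (p,n) \<in> E}. h (p,n))"
    by (rule sum.swap_restrict) auto
  also have "\<dots> \<le> (\<Sum>n\<in>{..N}. C0 * norm (f n) * (if n = 0 then 0 else w (\<iota> n)))"
  proof (rule sum_mono)
    fix n assume nN: "n \<in> {..N}"
    have eq: "(\<Sum>p\<in>{p. p \<in> {..N} \<and> (p,n) \<in> E}. h (p,n)) = C0 * norm (f n) * (\<Sum>p\<in>{p. p \<in> {..N} \<and> (p,n) \<in> E}. ln (real p))"
      by (simp add: h_def sum_distrib_left sum_distrib_right mult_ac)
    show "(\<Sum>p\<in>{p. p \<in> {..N} \<and> (p,n) \<in> E}. h (p,n)) \<le> C0 * norm (f n) * (if n = 0 then 0 else w (\<iota> n))"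
    proof (cases "n = 0")
      case True
      hence em: "{p. p \<in> {..N} \<and> (p,n) \<in> E} = {}" by (auto simp: E_def exc_set_def)
      show ?thesis unfolding em using True by simp
    next
      case False
      hence n1: "1 \<le> n" by simp
      define i where "i = \<iota> n"
      have iL: "i \<le> L" unfolding i_def \<iota>_def L_def by (rule floor_log_le_iff) simp
      have Jb: "1 \<le> Jidx N s i" "Jidx N s i \<le> int i + 1" using Jidx_bounds[OF N2 s2 sN] iL by (auto simp: L_def)
      have J1: "1 \<le> Jn i" and Ji: "Jn i \<le> i + 1" using Jb by (auto simp: Jn_def)
      have ilog: "real i \<le> log 2 (real N)" using iL LlogN by linarith
      have sub: "{p. p \<in> {..N} \<and> (p,n) \<in> E} \<subseteq> {p. prime p \<and> p * n \<le> N \<and> (real p, real n) \<notin> Rect_i N i \<and>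
            (\<forall>j k. 1 \<le> j \<longrightarrow> j \<le> Jn i \<longrightarrow> 2^(j-1) \<le> k \<longrightarrow> k \<le> 2^j \<longrightarrow> (real p, real n) \<notin> Rect_ijk N i j k)}"
      proof
        fix p assume "p \<in> {p. p \<in> {..N} \<and> (p,n) \<in> E}"
        hence pE: "(p,n) \<in> exc_set N s" by (simp add: E_def)
        have A: "prime p" "p * n \<le> N" "(real p, real n) \<notin> Rect_i N i" using pE ilog by (auto simp: exc_set_def)
        have B: "(real p, real n) \<notin> Rect_ijk N i j k" if "1 \<le> j" "j \<le> Jn i" "2^(j-1) \<le> k" "k \<le> 2^j" for j k
        proof -
          have "int j \<le> Jidx N s i" using that Jb by (simp add: Jn_def)
          hence "valid_ijk N s i j k" using that ilog by (simp add: valid_ijk_def)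
          thus ?thesis using pE by (simp add: exc_set_def)
        qed
        show "p \<in> {p. prime p \<and> p * n \<le> N \<and> (real p, real n) \<notin> Rect_i N i \<and>
            (\<forall>j k. 1 \<le> j \<longrightarrow> j \<le> Jn i \<longrightarrow> 2^(j-1) \<le> k \<longrightarrow> k \<le> 2^j \<longrightarrow> (real p, real n) \<notin> Rect_ijk N i j k)}"
          using A B by blast
      qed
      have fin2: "finite {p. prime p \<and> p * n \<le> N \<and> (real p, real n) \<notin> Rect_i N i \<and>
            (\<forall>j k. 1 \<le> j \<longrightarrow> j \<le> Jn i \<longrightarrow> 2^(j-1) \<le> k \<longrightarrow> k \<le> 2^j \<longrightarrow> (real p, real n) \<notin> Rect_ijk N i j k)}"
      proof (rule finite_subset[of _ "{..N}"])
        show "{p. prime p \<and> p * n \<le> N \<and> (real p, real n) \<notin> Rect_i N i \<and>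
            (\<forall>j k. 1 \<le> j \<longrightarrow> j \<le> Jn i \<longrightarrow> 2^(j-1) \<le> k \<longrightarrow> k \<le> 2^j \<longrightarrow> (real p, real n) \<notin> Rect_ijk N i j k)} \<subseteq> {..N}"
        proof
          fix x assume "x \<in> {p. prime p \<and> p * n \<le> N \<and> (real p, real n) \<notin> Rect_i N i \<and>
            (\<forall>j k. 1 \<le> j \<longrightarrow> j \<le> Jn i \<longrightarrow> 2^(j-1) \<le> k \<longrightarrow> k \<le> 2^j \<longrightarrow> (real p, real n) \<notin> Rect_ijk N i j k)}"
          hence "x * n \<le> N" by simp
          moreover have "x * 1 \<le> x * n" using n1 by (rule mult_le_mono2)
          ultimately have "x \<le> N" by linarith
          thus "x \<in> {..N}" by simp
        qed
      qed simp
      have "(\<Sum>p\<in>{p. p \<in> {..N} \<and> (p,n) \<in> E}. ln (real p)) \<le> (\<Sum>p\<in>{p. prime p \<and> p * n \<le> N \<and> (real p, real n) \<notin> Rect_i N i \<and>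
            (\<forall>j k. 1 \<le> j \<longrightarrow> j \<le> Jn i \<longrightarrow> 2^(j-1) \<le> k \<longrightarrow> k \<le> 2^j \<longrightarrow> (real p, real n) \<notin> Rect_ijk N i j k)}. ln (real p))"
        by (rule sum_mono2[OF fin2 sub]) (auto dest: prime_gt_0_nat)
      also have "\<dots> \<le> 4 * 2^i * real (Jn i) / 2^(Jn i)"
        by (rule fiber_bound[OF n1 _ _ J1 Ji]) (use nN in \<open>auto simp: i_def \<iota>_def\<close>)
      finally have "(\<Sum>p\<in>{p. p \<in> {..N} \<and> (p,n) \<in> E}. ln (real p)) \<le> w (\<iota> n)" by (simp add: w_def i_def)
      hence "C0 * norm (f n) * (\<Sum>p\<in>{p. p \<in> {..N} \<and> (p,n) \<in> E}. ln (real p)) \<le> C0 * norm (f n) * w (\<iota> n)"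
        using C0 by (intro mult_left_mono) auto
      thus ?thesis using eq False by simp
    qed
  qed
  also have "\<dots> = (\<Sum>n\<in>{1..N}. C0 * norm (f n) * w (\<iota> n))"
  proof -
    have "{..N} = insert 0 {1..N}" by auto
    thus ?thesis by (simp add: sum.insert_if)
  qed
  also have "\<dots> = (\<Sum>i\<in>{..L}. \<Sum>n\<in>{n. n \<in> {1..N} \<and> \<iota> n = i}. C0 * norm (f n) * w (\<iota> n))"
  proof (rule sum.group[symmetric])
    show "\<iota> ` {1..N} \<subseteq> {..L}" unfolding \<iota>_def L_def by (auto intro: floor_log_le_iff)
  qed auto
  also have "\<dots> = (\<Sum>i\<in>{..L}. C0 * w i * (\<Sum>n\<in>{n. n \<in> {1..N} \<and> \<iota> n = i}. norm (f n)))"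
    by (intro sum.cong refl) (auto simp: sum_distrib_left mult_ac)
  also have "\<dots> \<le> (\<Sum>i\<in>{..L}. C0 * w i * (C1 * (real N / 2^i)))"
  proof (rule sum_mono)
    fix i assume iL: "i \<in> {..L}"
    have wpos: "C0 * w i \<ge> 0" using C0 by (simp add: w_def)
    have sub: "{n. n \<in> {1..N} \<and> \<iota> n = i} \<subseteq> {1..nat \<lfloor>real N / 2^i\<rfloor>}"
    proof
      fix n assume "n \<in> {n. n \<in> {1..N} \<and> \<iota> n = i}"
      hence n: "1 \<le> n" "n \<le> N" "floor_log (N div n) = i" by (auto simp: \<iota>_def)
      have "N div n \<ge> 1" using div_le_mono[OF n(2), of n] n by simp
      hence "2^i \<le> N div n" using floor_log_exp2_le[of "N div n"] n by simp
      hence "2^i * n \<le> N" using n by (simp add: less_eq_div_iff_mult_less_eq)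
      hence "n \<le> N div 2^i" by (simp add: less_eq_div_iff_mult_less_eq mult.commute)
      moreover have "nat \<lfloor>real N / 2^i\<rfloor> = N div 2^i"
      proof -
        have "\<lfloor>real N / real ((2::nat)^i)\<rfloor> = int (N div 2^i)" by (rule floor_divide_of_nat_eq)
        thus ?thesis by simp
      qed
      ultimately show "n \<in> {1..nat \<lfloor>real N / 2^i\<rfloor>}" using n by simp
    qed
    have X1: "real N / 2^i \<ge> 1"
    proof -
      have "2^i \<le> (2::nat)^L" using iL by (intro power_increasing) auto
      also have "\<dots> \<le> N" using floor_log_exp2_le[of N] N2 by (simp add: L_def)
      finally have "real (2^i) \<le> real N" by (simp only: of_nat_le_iff)
      thus ?thesis by simp
    qed
    have "(\<Sum>n\<in>{n. n \<in> {1..N} \<and> \<iota> n = i}. norm (f n)) \<le> (\<Sum>n\<in>{1..nat \<lfloor>real N / 2^i\<rfloor>}. norm (f n))"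
      by (rule sum_mono2[OF _ sub]) auto
    also have "\<dots> \<le> C1 * (real N / 2^i)" using hC1 X1 by blast
    finally show "C0 * w i * (\<Sum>n\<in>{n. n \<in> {1..N} \<and> \<iota> n = i}. norm (f n)) \<le> C0 * w i * (C1 * (real N / 2^i))"
      using wpos by (intro mult_left_mono) auto
  qed
  also have "\<dots> = 4 * C0 * C1 * real N * (\<Sum>i\<le>L. real (nat (Jidx N s i)) / 2^(nat (Jidx N s i)))"
    by (simp add: sum_distrib_left w_def Jn_def field_simps)
  also have "\<dots> \<le> 4 * C0 * C1 * real N * (4 + 3 * sqrt (s / real N) * ln (2 * real N / s) * ln s)"
    using main_sum[OF N2 s2 sN] C0 C1 by (intro mult_left_mono) (auto simp: L_def)
  also have "\<dots> \<le> 16 * C0 * C1 * (real N + sqrt (real N * s) * ln (2 * real N / s) * ln s)"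
  proof -
    have Npos: "real N > 0" using N2 by simp
    have sq: "real N * sqrt (s / real N) = sqrt (real N * s)"
    proof -
      have "real N = sqrt (real N) * sqrt (real N)" using Npos by simp
      hence "real N * sqrt (s / real N) = sqrt (real N) * sqrt (real N * (s / real N))"
        by (metis mult.assoc real_sqrt_mult)
      also have "real N * (s / real N) = s" using Npos by simp
      finally show ?thesis by (simp add: real_sqrt_mult)
    qed
    have u: "ln (2 * real N / s) \<ge> 0" using sN s2 by (simp add: field_simps)
    have l: "ln s \<ge> 0" using s2 by simp
    have P: "sqrt (real N * s) * ln (2 * real N / s) * ln s \<ge> 0" using u l s2 by (intro mult_nonneg_nonneg) auto
    have "4 * C0 * C1 * real N * (4 + 3 * sqrt (s / real N) * ln (2 * real N / s) * ln s)
          = C0 * C1 * (16 * real N + 12 * sqrt (real N * s) * ln (2 * real N / s) * ln s)"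
      using sq by (simp add: algebra_simps)
    also have "\<dots> \<le> C0 * C1 * (16 * (real N + sqrt (real N * s) * ln (2 * real N / s) * ln s))"
    proof (rule mult_left_mono)
      show "16 * real N + 12 * sqrt (real N * s) * ln (2 * real N / s) * ln s
            \<le> 16 * (real N + sqrt (real N * s) * ln (2 * real N / s) * ln s)" using P by (simp add: algebra_simps)
      show "0 \<le> C0 * C1" using C0 C1 by simp
    qed
    finally show ?thesis by (simp add: mult_ac)
  qed
  finally show ?thesis by (simp add: E_def)
qed
theorem mainTheorem6:
  shows "(\<exists>c>0. \<forall>(N::nat) (s::real) i j k.
            2 \<le> N \<and> 2 \<le> s \<and> s \<le> real N \<and> valid_ijk N s i j k \<longrightarrow>
            (\<exists>P P' N1 N1'. Rect_ijk N i j k = {P<..P'} \<times> {N1<..N1'}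
               \<and> P' - P \<ge> 1/4 \<and> N1' - N1 \<ge> 1/4 \<and> (P' - P) * (N1' - N1) \<ge> c * s))
   \<and> (\<forall>(A::real) (C0::real) (C1::real) (\<epsilon>::real). \<epsilon> > 0 \<longrightarrow>
       (\<exists>K. \<forall>(f::nat \<Rightarrow> complex) (g::nat \<Rightarrow> real) (N::nat) (s::real).
          multiplicative f
          \<and> (\<forall>p. prime p \<longrightarrow> norm (f p) \<le> C0)
          \<and> (\<forall>X::real. X \<ge> 1 \<longrightarrow> (\<Sum>n\<in>{1..nat \<lfloor>X\<rfloor>}. norm (f n)) \<le> C1 * X)
          \<and> (\<forall>X::real. X \<ge> 2 \<longrightarrow>
               (\<Sum>n\<in>{1..nat \<lfloor>X\<rfloor>}. (norm (f n))^2) \<le> C1 * X * (ln X) powr A)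
          \<and> 2 \<le> N \<and> 2 \<le> s \<and> s \<le> real N
          \<longrightarrow> norm (\<Sum>(p, n)\<in>exc_set N s. f p * complex_of_real (ln (real p)) * f n * e (g (p * n)))
              \<le> K * (ln (real N)) powr \<epsilon> *
                 (real N + sqrt (real N * s) * ln (2 * real N / s) * ln s)))"
  proof (intro conjI)
  show "\<exists>c>0. \<forall>(N::nat) (s::real) i j k.
            2 \<le> N \<and> 2 \<le> s \<and> s \<le> real N \<and> valid_ijk N s i j k \<longrightarrow>
            (\<exists>P P' N1 N1'. Rect_ijk N i j k = {P<..P'} \<times> {N1<..N1'}
               \<and> P' - P \<ge> 1/4 \<and> N1' - N1 \<ge> 1/4 \<and> (P' - P) * (N1' - N1) \<ge> c * s)"
  proof (rule exI[of _ "1/256"], intro conjI allI impI)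
    show "(0::real) < 1/256" by simp
  next
    fix N :: nat and s :: real and i j k :: nat
    assume h: "2 \<le> N \<and> 2 \<le> s \<and> s \<le> real N \<and> valid_ijk N s i j k"
    show "\<exists>P P' N1 N1'. Rect_ijk N i j k = {P<..P'} \<times> {N1<..N1'}
               \<and> P' - P \<ge> 1/4 \<and> N1' - N1 \<ge> 1/4 \<and> (P' - P) * (N1' - N1) \<ge> (1/256) * s"
      using h by (intro part1) auto
  qed
next
  show "\<forall>(A::real) (C0::real) (C1::real) (\<epsilon>::real). \<epsilon> > 0 \<longrightarrow>
       (\<exists>K. \<forall>(f::nat \<Rightarrow> complex) (g::nat \<Rightarrow> real) (N::nat) (s::real).
          multiplicative f
          \<and> (\<forall>p. prime p \<longrightarrow> norm (f p) \<le> C0)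
          \<and> (\<forall>X::real. X \<ge> 1 \<longrightarrow> (\<Sum>n\<in>{1..nat \<lfloor>X\<rfloor>}. norm (f n)) \<le> C1 * X)
          \<and> (\<forall>X::real. X \<ge> 2 \<longrightarrow>
               (\<Sum>n\<in>{1..nat \<lfloor>X\<rfloor>}. (norm (f n))^2) \<le> C1 * X * (ln X) powr A)
          \<and> 2 \<le> N \<and> 2 \<le> s \<and> s \<le> real N
          \<longrightarrow> norm (\<Sum>(p, n)\<in>exc_set N s. f p * complex_of_real (ln (real p)) * f n * e (g (p * n)))
              \<le> K * (ln (real N)) powr \<epsilon> *
                 (real N + sqrt (real N * s) * ln (2 * real N / s) * ln s))"
  proof (intro allI impI)
    fix A C0 C1 \<epsilon> :: real assume ep: "\<epsilon> > 0"
    define K where "K = 16 * C0 * C1 / (ln 2 powr \<epsilon>)"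
    show "\<exists>K. \<forall>(f::nat \<Rightarrow> complex) (g::nat \<Rightarrow> real) (N::nat) (s::real).
          multiplicative f
          \<and> (\<forall>p. prime p \<longrightarrow> norm (f p) \<le> C0)
          \<and> (\<forall>X::real. X \<ge> 1 \<longrightarrow> (\<Sum>n\<in>{1..nat \<lfloor>X\<rfloor>}. norm (f n)) \<le> C1 * X)
          \<and> (\<forall>X::real. X \<ge> 2 \<longrightarrow>
               (\<Sum>n\<in>{1..nat \<lfloor>X\<rfloor>}. (norm (f n))^2) \<le> C1 * X * (ln X) powr A)
          \<and> 2 \<le> N \<and> 2 \<le> s \<and> s \<le> real N
          \<longrightarrow> norm (\<Sum>(p, n)\<in>exc_set N s. f p * complex_of_real (ln (real p)) * f n * e (g (p * n)))
              \<le> K * (ln (real N)) powr \<epsilon> *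
                 (real N + sqrt (real N * s) * ln (2 * real N / s) * ln s)"
    proof (rule exI[of _ K], intro allI impI)
      fix f :: "nat \<Rightarrow> complex" and g :: "nat \<Rightarrow> real" and N :: nat and s :: real
      assume H: "multiplicative f
          \<and> (\<forall>p. prime p \<longrightarrow> norm (f p) \<le> C0)
          \<and> (\<forall>X::real. X \<ge> 1 \<longrightarrow> (\<Sum>n\<in>{1..nat \<lfloor>X\<rfloor>}. norm (f n)) \<le> C1 * X)
          \<and> (\<forall>X::real. X \<ge> 2 \<longrightarrow>
               (\<Sum>n\<in>{1..nat \<lfloor>X\<rfloor>}. (norm (f n))^2) \<le> C1 * X * (ln X) powr A)
          \<and> 2 \<le> N \<and> 2 \<le> s \<and> s \<le> real N"
      hence mf: "multiplicative f" and hC0: "\<forall>p. prime p \<longrightarrow> norm (f p) \<le> C0"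
        and hC1: "\<forall>X::real. X \<ge> 1 \<longrightarrow> (\<Sum>n\<in>{1..nat \<lfloor>X\<rfloor>}. norm (f n)) \<le> C1 * X"
        and N2: "2 \<le> N" and s2: "2 \<le> s" and sN: "s \<le> real N" by auto
      have C0: "C0 \<ge> 0" using hC0 two_is_prime_nat by (meson norm_ge_zero order_trans)
      have f1: "f 1 = 1" using mf by (simp add: multiplicative_def)
      have C1: "C1 \<ge> 1" using hC1[rule_format, of 1] f1 by simp
      define X where "X = real N + sqrt (real N * s) * ln (2 * real N / s) * ln s"
      have Xnn: "X \<ge> 0"
      proof -
        have u: "ln (2 * real N / s) \<ge> 0" using sN s2 by (simp add: field_simps)
        have l: "ln s \<ge> 0" using s2 by simp
        have "sqrt (real N * s) * ln (2 * real N / s) * ln s \<ge> 0" using u l s2 by (intro mult_nonneg_nonneg) auto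
        thus ?thesis by (simp add: X_def)
      qed
      have l2: "ln (2::real) > 0" by simp
      have pw: "ln 2 powr \<epsilon> \<le> ln (real N) powr \<epsilon>"
        using N2 ep by (intro powr_mono2) auto
      have pp: "ln 2 powr \<epsilon> > 0" using l2 by simp
      have "16 * C0 * C1 = K * ln 2 powr \<epsilon>" using pp by (simp add: K_def)
      also have "\<dots> \<le> K * ln (real N) powr \<epsilon>"
        using pw C0 C1 pp by (intro mult_left_mono) (auto simp: K_def)
      finally have KK: "16 * C0 * C1 \<le> K * ln (real N) powr \<epsilon>" .
      have "norm (\<Sum>(p, n)\<in>exc_set N s. f p * complex_of_real (ln (real p)) * f n * e (g (p * n)))
          \<le> 16 * C0 * C1 * X" unfolding X_def by (rule part2[OF mf hC0 hC1 N2 s2 sN])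
      also have "\<dots> \<le> K * ln (real N) powr \<epsilon> * X" using KK Xnn by (intro mult_right_mono)
      finally show "norm (\<Sum>(p, n)\<in>exc_set N s. f p * complex_of_real (ln (real p)) * f n * e (g (p * n)))
              \<le> K * (ln (real N)) powr \<epsilon> *
                 (real N + sqrt (real N * s) * ln (2 * real N / s) * ln s)" by (simp add: X_def)
    qed
  qed
qed

end
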